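(* Let $m=2^p>2$ and $r_1,\dots,r_m\in\{1,\dots,m\}$ (repetitions allowed) with $b(r_1-1)\oplus\dots\oplus b(r_m-1)=0$, and let $A$ be the $m\times m$ matrix whose $i$-th row is the $r_i$-th row of $H(m)$. Fix an index $i$ and some $r'_i\in\{1,\dots,m\}$ with $r'_i\neq r_i$, and let $B$ be obtained from $A$ by replacing its $i$-th row with the $r'_i$-th row of $H(m)$. Then the row indices of $B$ have nonzero XOR, i.e. $b(r_1-1)\oplus\dots\oplus b(r'_i-1)\oplus\dots\oplus b(r_m-1)\neq0$, and hence $\mathrm{perm}\,B=0$.
   Context: For $m=2^p$, the Sylvester matrix $H(m)$ is defined recursively by $H(1)=[1]$ and $H(2^p)=\begin{bmatrix}H(2^{p-1})&H(2^{p-1})\\ H(2^{p-1})&-H(2^{p-1})\end{bmatrix}$, rows and columns indexed $1,\dots,m$. Here $b(x)$ denotes the $p$-bit binary representation of $x\in\{0,\dots,m-1\}$ and $\oplus$ is bitwise XOR. $\mathrm{perm}\,A=\sum_{\sigma\in S_m}\prod_{i=1}^m a_{i,\sigma(i)}$. *)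

theory Defs
  imports Main "HOL-Combinatorics.Permutations"
begin

text \<open>Sylvester matrix H(2^p), 0-indexed entries: sylv0 p i j for i, j < 2^p,
  defined by the block recursion H(2^(p+1)) = [[H, H], [H, -H]].\<close>
fun sylv0 :: "nat \<Rightarrow> nat \<Rightarrow> nat \<Rightarrow> int" where
  "sylv0 0 i j = 1"
| "sylv0 (Suc p) i j =
     (let h = 2 ^ p in
      if i < h \<and> j < h then sylv0 p i j
      else if i < h then sylv0 p i (j - h)
      else if j < h then sylv0 p (i - h) j
      else - sylv0 p (i - h) (j - h))"

definition sylvester :: "nat \<Rightarrow> nat \<Rightarrow> nat \<Rightarrow> int" where
  "sylvester p i j = sylv0 p (i - 1) (j - 1)"

definition perm_mat :: "nat \<Rightarrow> (nat \<Rightarrow> nat \<Rightarrow> int) \<Rightarrow> int" where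
  "perm_mat m A = (\<Sum>\<sigma> | \<sigma> permutes {1..m}. \<Prod>i = 1..m. A i (\<sigma> i))"

definition xor_rows :: "nat \<Rightarrow> (nat \<Rightarrow> nat) \<Rightarrow> nat" where
  "xor_rows m r = foldr (\<lambda>k acc. xor (r k - 1) acc) [1..<m+1] 0"

end

theory Submission imports Defs begin

definition chi :: "nat \<Rightarrow> nat \<Rightarrow> nat \<Rightarrow> int" where
  "chi p i j = (\<Prod>b<p. if bit i b \<and> bit j b then -1 else 1)"

lemma bit_sub_h:
  fixes i p :: nat
  assumes "2^p \<le> i" "i < 2^Suc p" "b < p"
  shows "bit (i - 2^p) b = bit i b"
proof -
  have "i - 2^p = i mod 2^p" using assms by (simp add: le_mod_geq)
  then show ?thesis using assms by (simp add: bit_take_bit_iff flip: take_bit_eq_mod)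
qed

lemma bit_p_iff:
  fixes i p :: nat
  assumes "i < 2^Suc p"
  shows "bit i p \<longleftrightarrow> 2^p \<le> i"
proof -
  have lt: "i div 2^p < 2" using assms by (simp add: less_mult_imp_div_less mult.commute)
  have "i div 2^p = 0 \<or> i div 2^p = 1" using lt by linarith
  moreover have "0 < i div 2^p \<longleftrightarrow> 2^p \<le> i" by (simp add: div_greater_zero_iff)
  ultimately show ?thesis by (auto simp: bit_iff_odd)
qed

lemma sylv0_chi: "i < 2^p \<Longrightarrow> j < 2^p \<Longrightarrow> sylv0 p i j = chi p i j"
proof (induction p arbitrary: i j)
  case 0
  then show ?case by (simp add: chi_def)
next
  case (Suc p)
  let ?h = "2^p :: nat"
  have split: "chi (Suc p) i j = chi p i j * (if bit i p \<and> bit j p then -1 else 1)"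
    by (simp add: chi_def)
  have ci: "chi p (i - ?h) j = chi p i j" if "?h \<le> i" for j
    unfolding chi_def using bit_sub_h[OF that Suc.prems(1)] by (intro prod.cong) auto
  have cj: "chi p i (j - ?h) = chi p i j" if "?h \<le> j" for i
    unfolding chi_def using bit_sub_h[OF that Suc.prems(2)] by (intro prod.cong) auto
  have bi: "bit i p \<longleftrightarrow> ?h \<le> i" using bit_p_iff Suc.prems by blast
  have bj: "bit j p \<longleftrightarrow> ?h \<le> j" using bit_p_iff Suc.prems by blast
  show ?case
  proof (cases "i < ?h")
    case True
    then show ?thesis
    proof (cases "j < ?h")
      case True
      then show ?thesis using \<open>i < ?h\<close> Suc.IH split bi by simp
    next
      case False
      then have "j - ?h < ?h" using Suc.prems by simp
      then show ?thesis using \<open>i < ?h\<close> False Suc.IH[of i "j - ?h"] split bi cj[of i] by (simp add: Let_def)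
    qed
  next
    case False
    then have ih: "i - ?h < ?h" using Suc.prems by simp
    show ?thesis
    proof (cases "j < ?h")
      case True
      then show ?thesis using ih False Suc.IH[of "i - ?h" j] split bj ci[of j] by (simp add: Let_def)
    next
      case False2: False
      then have "j - ?h < ?h" using Suc.prems by simp
      then show ?thesis using ih False False2 Suc.IH[of "i - ?h" "j - ?h"] split bi bj
          ci[of "j - ?h"] cj[of i] by (simp add: Let_def)
    qed
  qed
qed

lemma chi_xor2: "chi p a (xor j c) = chi p a j * chi p a c"
  unfolding chi_def by (simp add: prod.distrib[symmetric] bit_xor_iff) (intro prod.cong, auto)

lemma chi_xor1: "chi p (xor a b) c = chi p a c * chi p b c"
  unfolding chi_def by (simp add: prod.distrib[symmetric] bit_xor_iff) (intro prod.cong, auto)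

lemma chi_0: "chi p 0 c = 1" by (simp add: chi_def)

lemma chi_foldr: "chi p (foldr (\<lambda>k acc. xor (r k - 1) acc) xs 0) c = prod_list (map (\<lambda>k. chi p (r k - 1) c) xs)"
  by (induction xs) (auto simp: chi_0 chi_xor1)

lemma xor_rows_chi: "chi p (xor_rows m r) c = (\<Prod>k=1..m. chi p (r k - 1) c)"
proof -
  have "prod_list (map (\<lambda>k. chi p (r k - 1) c) [1..<m+1]) = (\<Prod>k\<in>set [1..<m+1]. chi p (r k - 1) c)"
    by (rule prod.distinct_set_conv_list[symmetric]) simp
  also have "set [1..<m+1] = {1..m}" by auto
  finally show ?thesis unfolding xor_rows_def chi_foldr .
qed

lemma xor_lt: "(a::nat) < 2^p \<Longrightarrow> b < 2^p \<Longrightarrow> xor a b < 2^p"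
  by (metis take_bit_nat_eq_self_iff take_bit_xor)

lemma foldr_lt: "\<forall>k\<in>set xs. r k - 1 < (2::nat)^p \<Longrightarrow> foldr (\<lambda>k acc. xor (r k - 1) acc) xs 0 < 2^p"
  by (induction xs) (auto intro: xor_lt)

lemma xx: "xor a (xor a (x::nat)) = x" by (rule bit_eqI) (auto simp: bit_xor_iff)

lemma xor_rows_upd: "i \<in> {1..m} \<Longrightarrow> xor_rows m (r(i := v)) = xor (xor (xor_rows m r) (r i - 1)) (v - 1)"
proof -
  have gen: "foldr (\<lambda>k acc. xor ((r(i:=v)) k - 1) acc) xs 0 =
     (if i \<in> set xs then xor (xor (foldr (\<lambda>k acc. xor (r k - 1) acc) xs 0) (r i - 1)) (v - 1)
      else foldr (\<lambda>k acc. xor (r k - 1) acc) xs 0)" if "distinct xs" for xs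
    using that by (induction xs) (auto simp: ac_simps xx)
  assume "i \<in> {1..m}"
  then show ?thesis unfolding xor_rows_def using gen[of "[1..<m+1]"] by auto
qed


lemma bit_ge_false: "(s::nat) < 2^p \<Longrightarrow> p \<le> b \<Longrightarrow> \<not> bit s b"
proof -
  assume "s < 2^p" "p \<le> b"
  then have "s < 2^b" using power_increasing[of p b "2::nat"] by linarith
  then show ?thesis by (simp add: bit_iff_odd)
qed

theorem corollary3:
  fixes p m :: nat and r :: "nat \<Rightarrow> nat" and i r' :: nat
    and A B :: "nat \<Rightarrow> nat \<Rightarrow> int"
  assumes hm: "m = 2 ^ p" and hm2: "m > 2"
    and hr: "\<forall>k \<in> {1..m}. r k \<in> {1..m}"
    and hx: "xor_rows m r = 0"
    and hA: "A = (\<lambda>k j. sylvester p (r k) j)"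
    and hi: "i \<in> {1..m}"
    and hr': "r' \<in> {1..m}" and hne: "r' \<noteq> r i"
    and hB: "B = (\<lambda>k j. if k = i then sylvester p r' j else A k j)"
  shows "xor_rows m (r(i := r')) \<noteq> 0 \<and> perm_mat m B = 0"
proof -
  define r2 where "r2 = r(i := r')"
  define s where "s = xor_rows m r2"
  have s_eq: "s = xor (r i - 1) (r' - 1)"
    unfolding s_def r2_def using xor_rows_upd[OF hi, of r r'] hx by simp
  have ri: "r i \<in> {1..m}" using hr hi by blast
  have "r i - 1 \<noteq> r' - 1" using ri hr' hne by auto
  then have s0: "s \<noteq> 0" unfolding s_eq
    by (metis xx xor.right_neutral)
  have r2r: "\<forall>k\<in>{1..m}. r2 k \<in> {1..m}" using hr hr' unfolding r2_def by auto
  have slt: "s < 2^p" unfolding s_eq using ri hr' hm by (intro xor_lt) auto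
  have "\<exists>b. bit s b"
  proof (rule ccontr)
    assume "\<not> (\<exists>b. bit s b)"
    then have "s = 0" by (intro bit_eqI) auto
    then show False using s0 by simp
  qed
  then obtain b where bb: "bit s b" by blast
  have bp: "b < p" using bit_ge_false[OF slt] bb by (meson not_le)
  define c :: nat where "c = 2^b"
  have clt: "c < 2^p" unfolding c_def using bp by simp
  have chis: "chi p s c = -1"
  proof -
    have "chi p s c = (\<Prod>b'<p. if b' = b then -1 else 1)"
      unfolding chi_def c_def by (intro prod.cong) (auto simp: bit_exp_iff bb)
    also have "\<dots> = -1" using bp by (simp add: prod.delta)
    finally show ?thesis .
  qed
  define g where "g x = (if x \<in> {1..m} then xor (x - 1) c + 1 else x)" for x
  have gin: "g x \<in> {1..m}" if "x \<in> {1..m}" for x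
  proof -
    have "xor (x - 1) c < 2^p" using that hm clt by (intro xor_lt) auto
    then show ?thesis using that hm unfolding g_def by auto
  qed
  have gg: "g (g x) = x" for x
  proof (cases "x \<in> {1..m}")
    case True
    then have "g (g x) = xor (xor (x - 1) c) c + 1" using gin[OF True] unfolding g_def[of "g x"]
      by (simp add: g_def)
    also have "\<dots> = x" using True by (simp add: xor.assoc)
    finally show ?thesis .
  next
    case False
    then show ?thesis by (simp only: g_def if_False)
  qed
  have gperm: "g permutes {1..m}"
    unfolding permutes_def
  proof (intro conjI allI impI)
    show "g x = x" if "x \<notin> {1..m}" for x using that unfolding g_def by presburger
    show "\<exists>!x. g x = y" for y by (metis gg)
  qed
  define F where "F \<sigma> = (\<Prod>k=1..m. B k (\<sigma> k))" for \<sigma> :: "nat \<Rightarrow> nat"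
  have Bk: "B k j = chi p (r2 k - 1) (j - 1)" if "k \<in> {1..m}" "j \<in> {1..m}" for k j
  proof -
    have "B k j = sylvester p (r2 k) j" using hB hA unfolding r2_def by auto
    also have "\<dots> = chi p (r2 k - 1) (j - 1)" unfolding sylvester_def
    proof (rule sylv0_chi)
      have "r2 k \<in> {1..m}" using r2r that by blast
      then show "r2 k - 1 < 2^p" using hm by auto
      show "j - 1 < 2^p" using that hm by auto
    qed
    finally show ?thesis .
  qed
  have Fg: "F (g \<circ> \<sigma>) = - F \<sigma>" if sp: "\<sigma> permutes {1..m}" for \<sigma>
  proof -
    have "F (g \<circ> \<sigma>) = (\<Prod>k=1..m. B k (\<sigma> k) * chi p (r2 k - 1) c)"
      unfolding F_def
    proof (intro prod.cong refl)
      fix k assume k: "k \<in> {1..m}"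
      have sk: "\<sigma> k \<in> {1..m}" using permutes_in_image[OF sp] k by simp
      have "B k ((g \<circ> \<sigma>) k) = chi p (r2 k - 1) (g (\<sigma> k) - 1)"
        using Bk[OF k gin[OF sk]] by simp
      also have "g (\<sigma> k) - 1 = xor (\<sigma> k - 1) c" using sk by (simp add: g_def)
      finally show "B k ((g \<circ> \<sigma>) k) = B k (\<sigma> k) * chi p (r2 k - 1) c"
        using Bk[OF k sk] by (simp add: chi_xor2)
    qed
    also have "\<dots> = F \<sigma> * chi p s c"
      unfolding F_def s_def xor_rows_chi by (simp add: prod.distrib)
    finally show ?thesis using chis by simp
  qed
  have "perm_mat m B = (\<Sum>\<sigma> | \<sigma> permutes {1..m}. F \<sigma>)"
    unfolding perm_mat_def F_def ..
  also have "\<dots> = (\<Sum>\<sigma> | \<sigma> permutes {1..m}. F (g \<circ> \<sigma>))"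
  proof (rule sum.reindex_bij_witness[where i="\<lambda>\<sigma>. g \<circ> \<sigma>" and j="\<lambda>\<sigma>. g \<circ> \<sigma>"])
    show "g \<circ> (g \<circ> a) = a" for a by (simp add: fun_eq_iff gg)
    show "g \<circ> a \<in> {\<sigma>. \<sigma> permutes {1..m}}" if "a \<in> {\<sigma>. \<sigma> permutes {1..m}}" for a
      using that gperm by (simp add: permutes_compose)
    show "g \<circ> a \<in> {\<sigma>. \<sigma> permutes {1..m}}" if "a \<in> {\<sigma>. \<sigma> permutes {1..m}}" for a
      using that gperm by (simp add: permutes_compose)
    show "g \<circ> (g \<circ> a) = a" for a by (simp add: fun_eq_iff gg)
  next
    fix a show "F (g \<circ> (g \<circ> a)) = F a"
      by (metis (no_types, lifting) comp_def gg ext)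
  qed
  also have "\<dots> = - (\<Sum>\<sigma> | \<sigma> permutes {1..m}. F \<sigma>)"
    by (simp add: Fg sum_negf)
  finally have "perm_mat m B = - perm_mat m B"
    unfolding perm_mat_def F_def .
  then have "perm_mat m B = 0" by simp
  then show ?thesis using s0 unfolding s_def r2_def by simp
qed

end
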